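(* For any graph $G$ of order $n$ and maximum degree $\Delta=\Delta(G)\ge 2$, $$\left\lceil \frac{2n}{\Delta}\right\rceil\le \gamma_{qtR}(G)\le n-\Delta(G)+2.$$
   Context: All graphs are finite, simple and undirected. For $f:V(G)\to\{0,1,2\}$ write $V_i=\{v:f(v)=i\}$; weight $\omega(f)=|V_1|+2|V_2|$. A quasi-total Roman dominating function (QTRDF) is an $f$ such that every vertex labeled $0$ is adjacent to a vertex labeled $2$, and every vertex isolated in the subgraph induced by $V_1\cup V_2$ has label $1$; $\gamma_{qtR}(G)$ is the minimum weight of a QTRDF. *)

theory Defs
  imports Complex_Main
begin

definition graph :: "'a set \<Rightarrow> ('a \<Rightarrow> 'a \<Rightarrow> bool) \<Rightarrow> bool" where
  "graph V E \<longleftrightarrow> finite V \<and> (\<forall>u v. E u v \<longrightarrow> u \<in> V \<and> v \<in> V)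
     \<and> (\<forall>u v. E u v \<longrightarrow> E v u) \<and> (\<forall>v. \<not> E v v)"

definition degree :: "'a set \<Rightarrow> ('a \<Rightarrow> 'a \<Rightarrow> bool) \<Rightarrow> 'a \<Rightarrow> nat" where
  "degree V E v = card {u \<in> V. E v u}"

definition max_degree :: "'a set \<Rightarrow> ('a \<Rightarrow> 'a \<Rightarrow> bool) \<Rightarrow> nat" where
  "max_degree V E = Max (insert 0 (degree V E ` V))"

text \<open>Quasi-total Roman dominating function: values in {0,1,2} on V; every vertex
labelled 0 has a neighbour labelled 2; every vertex isolated in the subgraph induced
by V1 \<union> V2 (i.e. with positive label and no neighbour of positive label) has label 1.\<close>
definition is_qtrdf :: "'a set \<Rightarrow> ('a \<Rightarrow> 'a \<Rightarrow> bool) \<Rightarrow> ('a \<Rightarrow> nat) \<Rightarrow> bool" where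
  "is_qtrdf V E f \<longleftrightarrow>
     (\<forall>v\<in>V. f v \<in> {0,1,2})
     \<and> (\<forall>v\<in>V. f v = 0 \<longrightarrow> (\<exists>u\<in>V. E v u \<and> f u = 2))
     \<and> (\<forall>v\<in>V. f v \<noteq> 0 \<and> (\<forall>u\<in>V. E v u \<longrightarrow> f u = 0) \<longrightarrow> f v = 1)"

definition weight :: "'a set \<Rightarrow> ('a \<Rightarrow> nat) \<Rightarrow> nat" where
  "weight V f = (\<Sum>v\<in>V. f v)"

definition gamma_qtR :: "'a set \<Rightarrow> ('a \<Rightarrow> 'a \<Rightarrow> bool) \<Rightarrow> nat" where
  "gamma_qtR V E = Min {weight V f | f. is_qtrdf V E f}"

end

theory Submission
  imports Defs
begin

lemma weight_split:
  assumes "finite V" "\<forall>v\<in>V. f v \<in> {0,1,2}"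
  shows "weight V f = card {v\<in>V. f v = 1} + 2 * card {v\<in>V. f v = 2}"
proof -
  have "weight V f = (\<Sum>v\<in>V. (if f v = 1 then 1 else 0) + (if f v = 2 then 2 else 0))"
    unfolding weight_def using assms(2) by (intro sum.cong) auto
  also have "\<dots> = (\<Sum>v\<in>V. (if f v = 1 then 1 else 0)) + (\<Sum>v\<in>V. (if f v = 2 then 2 else 0))"
    by (simp add: sum.distrib)
  also have "\<dots> = card {v\<in>V. f v = 1} + 2 * card {v\<in>V. f v = 2}"
    using assms(1) by (simp add: sum.If_cases Int_def mult.commute)
  finally show ?thesis .
qed

lemma lower:
  assumes g: "graph V E" and d: "max_degree V E \<ge> 2" and q: "is_qtrdf V E f"
  shows "2 * card V \<le> max_degree V E * weight V f"
proof -
  let ?D = "max_degree V E"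
  have fin: "finite V" using g unfolding graph_def by auto
  have vals: "\<forall>v\<in>V. f v \<in> {0,1,2}" using q unfolding is_qtrdf_def by auto
  have degle: "degree V E x \<le> ?D" if "x \<in> V" for x
    unfolding max_degree_def using fin that by (intro Max_ge) auto
  define V0 where "V0 = {v\<in>V. f v = 0}"
  define V1 where "V1 = {v\<in>V. f v = 1}"
  define V2 where "V2 = {v\<in>V. f v = 2}"
  have w: "weight V f = card V1 + 2 * card V2"
    unfolding V1_def V2_def using weight_split[OF fin vals] .
  have Vsplit: "V = V0 \<union> (V1 \<union> V2)" unfolding V0_def V1_def V2_def using vals by auto
  have cV: "card V = card V0 + card V1 + card V2"
  proof -
    have "card V = card V0 + card (V1 \<union> V2)"
      by (subst Vsplit, rule card_Un_disjoint) (use fin in \<open>auto simp: V0_def V1_def V2_def\<close>)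
    also have "card (V1 \<union> V2) = card V1 + card V2"
      by (rule card_Un_disjoint) (use fin in \<open>auto simp: V1_def V2_def\<close>)
    finally show ?thesis by simp
  qed
  have sub: "V0 \<subseteq> (\<Union>x\<in>V2. {u\<in>V0. E x u})"
  proof
    fix v assume "v \<in> V0"
    then obtain u where "u \<in> V" "E v u" "f u = 2" using q unfolding is_qtrdf_def V0_def by auto
    moreover have "E u v" using \<open>E v u\<close> g unfolding graph_def by auto
    ultimately show "v \<in> (\<Union>x\<in>V2. {u\<in>V0. E x u})" using \<open>v \<in> V0\<close> unfolding V2_def by auto
  qed
  have each: "card {u\<in>V0. E x u} \<le> ?D - 1" if "x \<in> V2" for x
  proof -
    have "x \<in> V" "f x = 2" using that unfolding V2_def by auto
    then obtain y where y: "y \<in> V" "E x y" "f y \<noteq> 0" using q unfolding is_qtrdf_def by force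
    have "{u\<in>V0. E x u} \<subseteq> {u\<in>V. E x u} - {y}" using y unfolding V0_def by auto
    hence "card {u\<in>V0. E x u} \<le> card ({u\<in>V. E x u} - {y})" using fin by (intro card_mono) auto
    also have "\<dots> = degree V E x - 1" unfolding degree_def using y fin by (subst card_Diff_singleton) auto
    also have "\<dots> \<le> ?D - 1" using degle[OF \<open>x \<in> V\<close>] by simp
    finally show ?thesis .
  qed
  have "card V0 \<le> card (\<Union>x\<in>V2. {u\<in>V0. E x u})"
    using sub fin by (intro card_mono finite_UN_I) (auto simp: V0_def V2_def)
  also have "\<dots> \<le> (\<Sum>x\<in>V2. card {u\<in>V0. E x u})" by (rule card_UN_le) (use fin in \<open>auto simp: V2_def\<close>)
  also have "\<dots> \<le> (\<Sum>x\<in>V2. ?D - 1)" by (rule sum_mono) (use each in auto)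
  also have "\<dots> = card V2 * (?D - 1)" by simp
  finally have c0: "card V0 \<le> card V2 * (?D - 1)" .
  have "2 * card V = 2 * card V0 + 2 * card V1 + 2 * card V2" using cV by simp
  also have "\<dots> \<le> 2 * (card V2 * (?D - 1)) + ?D * card V1 + 2 * card V2"
    using c0 d by (intro add_mono) auto
  also have "\<dots> = ?D * (card V1 + 2 * card V2)"
    using d by (cases ?D) (auto simp: algebra_simps)
  finally show ?thesis using w by simp
qed

theorem mainTheorem6:
  fixes V :: "'a set" and E :: "'a \<Rightarrow> 'a \<Rightarrow> bool"
  assumes "graph V E"
    and "max_degree V E \<ge> 2"
  shows "\<lceil>2 * real (card V) / real (max_degree V E)\<rceil> \<le> int (gamma_qtR V E)
    \<and> int (gamma_qtR V E) \<le> int (card V) - int (max_degree V E) + 2"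
proof -
  let ?D = "max_degree V E"
  have g: "graph V E" by fact
  have fin: "finite V" using g unfolding graph_def by auto
  have "?D \<in> insert 0 (degree V E ` V)" unfolding max_degree_def using fin by (intro Max_in) auto
  then obtain v where v: "v \<in> V" "degree V E v = ?D" using assms(2) by auto
  define N where "N = {u\<in>V. E v u}"
  have cN: "card N = ?D" using v unfolding N_def degree_def by simp
  have finN: "finite N" using fin unfolding N_def by auto
  hence "N \<noteq> {}" using cN assms(2) by auto
  then obtain u where u: "u \<in> N" by auto
  have uv: "u \<noteq> v" "u \<in> V" "E v u" using u g unfolding N_def graph_def by auto
  have vN: "v \<notin> N" using g unfolding N_def graph_def by auto
  define f where "f = (\<lambda>w. if w = v then 2 else if w = u then 1 else if E v w then 0 else (1::nat))"
  have q: "is_qtrdf V E f"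
    unfolding is_qtrdf_def
  proof (intro conjI ballI impI)
    fix w assume "w \<in> V" show "f w \<in> {0,1,2}" unfolding f_def by auto
  next
    fix w assume "w \<in> V" "f w = 0"
    have "w \<noteq> v" using \<open>f w = 0\<close> unfolding f_def by (auto split: if_splits)
    have "E v w" using \<open>f w = 0\<close> unfolding f_def by (auto split: if_splits)
    note this \<open>w \<noteq> v\<close>
    hence "E w v" using g unfolding graph_def by auto
    thus "\<exists>x\<in>V. E w x \<and> f x = 2" using v unfolding f_def by auto
  next
    fix w assume "w \<in> V" "f w \<noteq> 0 \<and> (\<forall>x\<in>V. E w x \<longrightarrow> f x = 0)"
    moreover have "f u = 1" using uv unfolding f_def by auto
    ultimately have "w \<noteq> v" "f w \<noteq> 0" using uv by auto
    thus "f w = 1" unfolding f_def by (auto split: if_splits)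
  qed
  have "int (weight V f) = (\<Sum>w\<in>V. 1 + (if w = v then 1 else 0) - (if w \<in> N - {u} then 1 else 0))"
    unfolding weight_def of_nat_sum
    using vN uv by (intro sum.cong) (auto simp: f_def N_def)
  also have "\<dots> = int (card V) + 1 - int (card (N - {u}))"
  proof -
    have "V \<inter> {w \<in> N. w \<noteq> u} = N - {u}" unfolding N_def by auto
    thus ?thesis using fin v by (simp add: sum.distrib sum_subtractf sum.If_cases)
  qed
  finally have wf: "int (weight V f) = int (card V) - int ?D + 2"
    using cN u finN assms(2) by (simp add: card_Diff_singleton of_nat_diff)
  have wle: "weight V h \<le> 2 * card V" if "is_qtrdf V E h" for h
  proof -
    have "weight V h \<le> (\<Sum>w\<in>V. 2)" unfolding weight_def
      using that unfolding is_qtrdf_def by (intro sum_mono) auto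
    thus ?thesis by simp
  qed
  let ?S = "{weight V f | f. is_qtrdf V E f}"
  have finS: "finite ?S" by (rule finite_subset[of _ "{..2 * card V}"]) (use wle in auto)
  have neS: "?S \<noteq> {}" using q by auto
  have "gamma_qtR V E \<in> ?S" unfolding gamma_qtR_def using finS neS by (rule Min_in)
  then obtain h where h: "is_qtrdf V E h" "gamma_qtR V E = weight V h" by auto
  have le: "gamma_qtR V E \<le> weight V f" unfolding gamma_qtR_def using finS q by (intro Min_le) auto
  have low: "2 * card V \<le> ?D * gamma_qtR V E" using lower[OF g assms(2) h(1)] h(2) by simp
  have Dpos: "real ?D > 0" using assms(2) by simp
  have "2 * real (card V) / real ?D \<le> real (gamma_qtR V E)"
    using low Dpos by (simp add: pos_divide_le_eq mult.commute flip: of_nat_mult)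
  hence "\<lceil>2 * real (card V) / real ?D\<rceil> \<le> int (gamma_qtR V E)"
    by (simp add: ceiling_le_iff)
  moreover have "int (gamma_qtR V E) \<le> int (card V) - int ?D + 2" using le wf by linarith
  ultimately show ?thesis by simp
qed

end
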